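(* Let $(\mathcal{P},\mathcal{L})$ be a $(6,4)$ net, and let $\mathcal{C}$ be its binary code, i.e. the $\mathbb{F}_2$-subspace of $\mathbb{F}_2^{\mathcal{P}}$ spanned by the characteristic functions $v^{\lambda}$ of the lines $\lambda\in\mathcal{L}$. Then $\dim_{\mathbb{F}_2}\mathcal{C}\le 20$.
   Context: An $(n,k)$ net is a pair $(\mathcal{P},\mathcal{L})$ where $\mathcal{P}$ is a set of $n^2$ points and $\mathcal{L}$ is a collection of $n$-element subsets of $\mathcal{P}$ (lines) such that: (1) $\mathcal{L}$ is the disjoint union of $k$ parallel classes, each of which is a partition of $\mathcal{P}$ into $n$ lines; (2) two lines from different parallel classes meet in exactly one point. $\mathbb{F}_2^{\mathcal{P}}$ denotes the $\mathbb{F}_2$-vector space of functions $\mathcal{P}\to\mathbb{F}_2$, and for $X\subseteq\mathcal{P}$, $v^X$ is the characteristic function of $X$. *)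

theory Defs
  imports Complex_Main "HOL-Library.Z2" "HOL-Library.Function_Algebras"
begin

definition is_net :: "'p set \<Rightarrow> 'p set set \<Rightarrow> nat \<Rightarrow> nat \<Rightarrow> bool" where
  "is_net P L n k \<longleftrightarrow>
     finite P \<and> card P = n ^ 2 \<and>
     (\<exists>Cls :: 'p set set set.
        finite Cls \<and> card Cls = k \<and> L = \<Union>Cls \<and>
        (\<forall>C1\<in>Cls. \<forall>C2\<in>Cls. C1 \<noteq> C2 \<longrightarrow> C1 \<inter> C2 = {}) \<and>
        (\<forall>C\<in>Cls. card C = n \<and>
           (\<forall>l\<in>C. l \<subseteq> P \<and> card l = n) \<and>
           (\<forall>x\<in>P. \<exists>!l. l \<in> C \<and> x \<in> l)) \<and>
        (\<forall>C1\<in>Cls. \<forall>C2\<in>Cls. C1 \<noteq> C2 \<longrightarrow>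
           (\<forall>l1\<in>C1. \<forall>l2\<in>C2. card (l1 \<inter> l2) = 1)))"

definition charvec :: "'p set \<Rightarrow> 'p \<Rightarrow> bit" where
  "charvec X = (\<lambda>x. if x \<in> X then 1 else 0)"

definition fscale :: "bit \<Rightarrow> ('p \<Rightarrow> bit) \<Rightarrow> ('p \<Rightarrow> bit)" where
  "fscale c f = (\<lambda>x. c * f x)"

definition binary_code :: "'p set set \<Rightarrow> ('p \<Rightarrow> bit) set" where
  "binary_code L = module.span fscale (charvec ` L)"

end

theory Submission
  imports Defs
begin


declare add_bit_eq_xor[simp del] mult_bit_eq_and[simp del]

lemma bit_add_self[simp]: "(a::bit) + a = 0"
  by (cases a) simp_all

lemma bit_add_eq0: "(a::bit) + b = 0 \<Longrightarrow> a = b"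
  by (cases a; cases b) simp_all

lemma fun_add_self[simp]: "(f::'p \<Rightarrow> bit) + f = 0"
  by (simp add: fun_eq_iff)

lemma supp_finite:
  assumes "finite P"
  shows "finite {f::'p\<Rightarrow>bit. \<forall>x. x \<notin> P \<longrightarrow> f x = 0}"
proof -
  have "{f::'p\<Rightarrow>bit. \<forall>x. x \<notin> P \<longrightarrow> f x = 0} \<subseteq> charvec ` Pow P"
  proof
    fix f :: "'p \<Rightarrow> bit" assume f: "f \<in> {f. \<forall>x. x \<notin> P \<longrightarrow> f x = 0}"
    have "f = charvec {x. f x = 1}"
      by (auto simp: fun_eq_iff charvec_def)
    moreover have "{x. f x = 1} \<subseteq> P" using f by auto
    ultimately show "f \<in> charvec ` Pow P" by blast
  qed
  then show ?thesis using assms by (meson finite_Pow_iff finite_imageI finite_subset)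
qed

lemma orth_count:
  fixes U W :: "('p \<Rightarrow> bit) set"
  assumes "finite P"
    and "\<forall>u\<in>U. \<forall>x. x \<notin> P \<longrightarrow> u x = 0"
    and "\<forall>w\<in>W. \<forall>x. x \<notin> P \<longrightarrow> w x = 0"
    and "0 \<in> U" "0 \<in> W"
    and "\<forall>a\<in>U. \<forall>b\<in>U. a + b \<in> U"
    and "\<forall>a\<in>W. \<forall>b\<in>W. a + b \<in> W"
    and "\<forall>u\<in>U. \<forall>w\<in>W. (\<Sum>x\<in>P. u x * w x) = 0"
  shows "card U * card W \<le> 2 ^ card P"
  using assms
proof (induction P arbitrary: U W rule: finite_induct)
  case empty
  have "U \<subseteq> {0}" using empty.prems(1) by (auto simp: fun_eq_iff)
  moreover have "W \<subseteq> {0}" using empty.prems(2) by (auto simp: fun_eq_iff)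
  ultimately have "card U \<le> 1" "card W \<le> 1"
    using card_mono[of "{0}" U] card_mono[of "{0}" W] by auto
  then show ?case using mult_le_mono[of "card U" 1 "card W" 1] by simp
next
  case (insert p P)
  let ?P' = "insert p P"
  have finU: "finite U"
  proof (rule finite_subset[OF _ supp_finite[of ?P']])
    show "U \<subseteq> {f. \<forall>x. x \<notin> ?P' \<longrightarrow> f x = 0}" using insert.prems(1) by auto
  qed (use insert.hyps(1) in simp)
  have finW: "finite W"
  proof (rule finite_subset[OF _ supp_finite[of ?P']])
    show "W \<subseteq> {f. \<forall>x. x \<notin> ?P' \<longrightarrow> f x = 0}" using insert.prems(2) by auto
  qed (use insert.hyps(1) in simp)
  define W' where "W' = (\<lambda>w. w(p := 0)) ` W"
  have finW': "finite W'" using finW W'_def by simp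
  have W'supp: "\<forall>w\<in>W'. \<forall>x. x \<notin> P \<longrightarrow> w x = 0"
    using insert.prems(2) W'_def by auto
  have W'0: "0 \<in> W'" unfolding W'_def
    by (rule image_eqI[of _ _ 0]) (auto simp: fun_eq_iff insert.prems(4))
  have W'add: "\<forall>a\<in>W'. \<forall>b\<in>W'. a + b \<in> W'"
  proof (intro ballI)
    fix a b assume "a \<in> W'" "b \<in> W'"
    then obtain a0 b0 where ab: "a0 \<in> W" "b0 \<in> W" "a = a0(p:=0)" "b = b0(p:=0)"
      unfolding W'_def by auto
    have "a0 + b0 \<in> W" using ab(1,2) insert.prems(6) by blast
    moreover have "a + b = (a0 + b0)(p := 0)" using ab(3,4) by (simp add: fun_eq_iff)
    ultimately show "a + b \<in> W'" unfolding W'_def by blast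
  qed
  have sumP: "(\<Sum>x\<in>P. u x * (w(p:=0)) x) = (\<Sum>x\<in>P. u x * w x)" for u w :: "'p \<Rightarrow> bit"
    using insert.hyps(2) by (intro sum.cong) auto
  have sumP': "(\<Sum>x\<in>?P'. u x * w x) = u p * w p + (\<Sum>x\<in>P. u x * w x)" for u w :: "'p \<Rightarrow> bit"
    by (rule sum.insert[OF insert.hyps(1,2)])
  show ?case
  proof (cases "\<exists>u1\<in>U. u1 p = 1")
    case True
    then obtain u1 where u1: "u1 \<in> U" "u1 p = 1" by blast
    define U0 where "U0 = {u\<in>U. u p = 0}"
    have finU0: "finite U0" using finU U0_def by simp
    have "card U0 * card W' \<le> 2 ^ card P"
    proof (rule insert.IH)
      show "\<forall>u\<in>U0. \<forall>x. x \<notin> P \<longrightarrow> u x = 0" using insert.prems(1) U0_def by auto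
      show "\<forall>w\<in>W'. \<forall>x. x \<notin> P \<longrightarrow> w x = 0" by fact
      show "0 \<in> U0" by (simp add: U0_def insert.prems(3))
      show "0 \<in> W'" by fact
      show "\<forall>a\<in>U0. \<forall>b\<in>U0. a + b \<in> U0"
      proof (intro ballI)
        fix a b assume ab: "a \<in> U0" "b \<in> U0"
        then have "a \<in> U" "b \<in> U" "a p = 0" "b p = 0" unfolding U0_def by auto
        then have "a + b \<in> U" "(a + b) p = 0" using insert.prems(5) by (blast, simp)
        then show "a + b \<in> U0" unfolding U0_def by blast
      qed
      show "\<forall>a\<in>W'. \<forall>b\<in>W'. a + b \<in> W'" by fact
      show "\<forall>u\<in>U0. \<forall>w\<in>W'. (\<Sum>x\<in>P. u x * w x) = 0"
        using insert.prems(7) U0_def W'_def sumP sumP' by auto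
    qed
    moreover have "card U \<le> 2 * card U0"
    proof -
      have "U \<subseteq> U0 \<union> (\<lambda>u. u + u1) ` U0"
      proof
        fix u assume u: "u \<in> U"
        show "u \<in> U0 \<union> (\<lambda>u. u + u1) ` U0"
        proof (cases "u p = 0")
          case True then show ?thesis using u U0_def by auto
        next
          case False
          then have "u p = 1" by simp
          have "u + u1 \<in> U" using u u1 insert.prems(5) by blast
          moreover have "(u + u1) p = 0" using \<open>u p = 1\<close> u1(2) by simp
          ultimately have "u + u1 \<in> U0" unfolding U0_def by blast
          moreover have "u = (u + u1) + u1" by (simp add: add.assoc)
          ultimately show ?thesis by blast
        qed
      qed
      then have "card U \<le> card (U0 \<union> (\<lambda>u. u + u1) ` U0)"
        using finU0 by (intro card_mono) auto
      also have "\<dots> \<le> card U0 + card ((\<lambda>u. u + u1) ` U0)" by (rule card_Un_le)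
      also have "\<dots> \<le> 2 * card U0" using card_image_le[OF finU0, of "\<lambda>u. u + u1"] by simp
      finally show ?thesis .
    qed
    moreover have "card W' = card W"
    proof -
      have "inj_on (\<lambda>w. w(p := 0)) W"
      proof
        fix w1 w2 assume w: "w1 \<in> W" "w2 \<in> W" "w1(p := 0) = w2(p := 0)"
        have eq: "w1 x = w2 x" if "x \<noteq> p" for x using w(3) that
          by (metis fun_upd_other)
        have "w1 + w2 \<in> W" using w insert.prems(6) by blast
        then have "(\<Sum>x\<in>?P'. u1 x * (w1 + w2) x) = 0" using insert.prems(7) u1 by blast
        moreover have "(\<Sum>x\<in>P. u1 x * (w1 + w2) x) = 0"
        proof (intro sum.neutral ballI)
          fix x assume "x \<in> P"
          then have "x \<noteq> p" using insert.hyps(2) by auto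
          then have "w1 x = w2 x" by (rule eq)
          then show "u1 x * (w1 + w2) x = 0" by simp
        qed
        ultimately have "(w1 + w2) p = 0" using sumP' u1 by simp
        then have "w1 p = w2 p" by (simp add: bit_add_eq0)
        then show "w1 = w2" using eq by (metis ext)
      qed
      then show ?thesis unfolding W'_def by (simp add: card_image)
    qed
    ultimately have "card U * card W \<le> 2 * 2 ^ card P"
      by (metis (no_types, lifting) mult.assoc mult_le_mono1 mult_le_mono2 order_trans)
    then show ?thesis using insert.hyps by simp
  next
    case False
    then have up: "\<forall>u\<in>U. u p = 0" by auto
    have "card U * card W' \<le> 2 ^ card P"
    proof (rule insert.IH)
      show "\<forall>u\<in>U. \<forall>x. x \<notin> P \<longrightarrow> u x = 0" using insert.prems(1) up by (metis insert_iff)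
      show "\<forall>w\<in>W'. \<forall>x. x \<notin> P \<longrightarrow> w x = 0" by fact
      show "0 \<in> U" by (rule insert.prems(3))
      show "0 \<in> W'" by fact
      show "\<forall>a\<in>U. \<forall>b\<in>U. a + b \<in> U" by (rule insert.prems(5))
      show "\<forall>a\<in>W'. \<forall>b\<in>W'. a + b \<in> W'" by fact
      show "\<forall>u\<in>U. \<forall>w\<in>W'. (\<Sum>x\<in>P. u x * w x) = 0"
      proof (intro ballI)
        fix u w' assume u: "u \<in> U" and w': "w' \<in> W'"
        then obtain w where w: "w \<in> W" "w' = w(p := 0)" unfolding W'_def by blast
        have "(\<Sum>x\<in>?P'. u x * w x) = 0" using insert.prems(7) u w by blast
        then have "(\<Sum>x\<in>P. u x * w x) = 0" using sumP'[of u w] bspec[OF up u] by simp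
        then show "(\<Sum>x\<in>P. u x * w' x) = 0" using sumP[of u w] w by simp
      qed
    qed
    moreover have "card W \<le> 2 * card W'"
    proof -
      have "W \<subseteq> W' \<union> (\<lambda>f. f(p := 1)) ` W'"
      proof
        fix w assume w: "w \<in> W"
        show "w \<in> W' \<union> (\<lambda>f. f(p := 1)) ` W'"
        proof (cases "w p = 0")
          case True
          then have "w = w(p:=0)" by auto
          then show ?thesis using w W'_def by blast
        next
          case False
          then have "w = (w(p:=0))(p:=1)" by (auto simp: fun_eq_iff)
          then show ?thesis using w W'_def by blast
        qed
      qed
      then have "card W \<le> card (W' \<union> (\<lambda>f. f(p := 1)) ` W')"
        using finW' by (intro card_mono) auto
      also have "\<dots> \<le> card W' + card ((\<lambda>f. f(p := 1)) ` W')" by (rule card_Un_le)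
      also have "\<dots> \<le> 2 * card W'" using card_image_le[OF finW', of "\<lambda>f. f(p := 1)"] by simp
      finally show ?thesis .
    qed
    ultimately have "card U * card W \<le> 2 * 2 ^ card P"
      by (metis (no_types, lifting) mult.left_commute mult_le_mono1 mult_le_mono2 order_trans)
    then show ?thesis using insert.hyps by simp
  qed
qed



definition ip :: "'p set \<Rightarrow> ('p \<Rightarrow> bit) \<Rightarrow> ('p \<Rightarrow> bit) \<Rightarrow> bit" where
  "ip P f g = (\<Sum>x\<in>P. f x * g x)"

interpretation F: vector_space fscale
  by unfold_locales (auto simp: fscale_def fun_eq_iff algebra_simps)

lemma ip_add_left: "ip P (f + g) h = ip P f h + ip P g h"
  by (simp add: ip_def distrib_right sum.distrib)

lemma ip_scale_left: "ip P (fscale a f) h = a * ip P f h"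
  by (simp add: ip_def fscale_def sum_distrib_left mult.assoc)

lemma ip_comm: "ip P f g = ip P g f"
  by (simp add: ip_def mult.commute)

lemma ip_zero_left[simp]: "ip P 0 g = 0"
  by (simp add: ip_def)

lemma ip_charvec:
  assumes "finite P"
  shows "ip P (charvec l) (charvec m) = of_nat (card (P \<inter> (l \<inter> m)))"
proof -
  have "ip P (charvec l) (charvec m) = (\<Sum>x\<in>P. if x \<in> l \<inter> m then 1 else 0)"
    unfolding ip_def charvec_def by (intro sum.cong) auto
  also have "\<dots> = (\<Sum>x\<in>P \<inter> (l \<inter> m). 1)"
    using sum.inter_restrict[OF assms, of "\<lambda>_. (1::bit)" "l \<inter> m"] by simp
  finally show ?thesis by simp
qed

lemma six_bit: "(of_nat 6 :: bit) = 0"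
proof -
  have "(of_nat 6 :: bit) = of_nat 2 * of_nat 3" by (simp flip: of_nat_mult)
  then show ?thesis by simp
qed

lemma bit_eq_from_iff: "((a::bit) = 1) = (b = 1) \<Longrightarrow> a = b"
  by (cases a; cases b) simp_all

lemma sum_inj_aux:
  assumes "F.independent B" "S \<subseteq> B" "T \<subseteq> B" "finite B"
    and eq: "(\<Sum>x\<in>S. x) = (\<Sum>x\<in>T. x)" and x: "x \<in> S"
  shows "x \<in> T"
proof (rule ccontr)
  assume nx: "x \<notin> T"
  have fS: "finite S" using assms finite_subset by blast
  have fT: "finite T" using assms finite_subset by blast
  have "(\<Sum>x\<in>S. x) = x + (\<Sum>y\<in>S - {x}. y)" using sum.remove[OF fS x] by simp
  then have xeq: "x = (\<Sum>y\<in>T. y) - (\<Sum>y\<in>S - {x}. y)" using eq by (simp add: algebra_simps)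
  have "(\<Sum>y\<in>T. y) \<in> F.span (B - {x})"
    using nx assms(3) by (intro F.span_sum F.span_base) auto
  moreover have "(\<Sum>y\<in>S - {x}. y) \<in> F.span (B - {x})"
    using assms(2) by (intro F.span_sum F.span_base) auto
  ultimately have "x \<in> F.span (B - {x})" using xeq F.span_diff by metis
  moreover have "x \<in> B" using x assms(2) by auto
  ultimately show False using assms(1) F.dependent_def by blast
qed

lemma card_ge_dim:
  assumes "finite C" "F.span C = C"
  shows "2 ^ F.dim C \<le> card C"
proof -
  obtain B where B: "B \<subseteq> C" "F.independent B" "C \<subseteq> F.span B" "card B = F.dim C"
    using F.basis_exists by blast
  have fB: "finite B" using B(1) assms(1) finite_subset by blast
  have "inj_on (\<lambda>S. \<Sum>x\<in>S. x) (Pow B)"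
  proof
    fix S T assume "S \<in> Pow B" "T \<in> Pow B" "(\<Sum>x\<in>S. x) = (\<Sum>x\<in>T. x)"
    then show "S = T" using sum_inj_aux[OF B(2) _ _ fB] by (metis PowD subsetI subset_antisym)
  qed
  moreover have "(\<lambda>S. \<Sum>x\<in>S. x) ` Pow B \<subseteq> C"
  proof
    fix v assume "v \<in> (\<lambda>S. \<Sum>x\<in>S. x) ` Pow B"
    then obtain S where S: "S \<subseteq> B" "v = (\<Sum>x\<in>S. x)" by auto
    have "\<forall>x\<in>S. x \<in> F.span B" using S(1) F.span_base by blast
    then have "(\<Sum>x\<in>S. x) \<in> F.span B" by (intro F.span_sum) blast
    then have "v \<in> F.span B" using S(2) by simp
    also have "F.span B \<subseteq> F.span C" using B(1) by (rule F.span_mono)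
    finally show "v \<in> C" using assms(2) by simp
  qed
  ultimately have "card (Pow B) \<le> card C" using card_inj_on_le assms(1) by blast
  then show ?thesis using B(4) fB by (simp add: card_Pow)
qed



lemma ex1_eq_aux: "\<exists>!y. Q y \<Longrightarrow> Q a \<Longrightarrow> Q b \<Longrightarrow> a = b"
  by blast

theorem mainTheorem1:
  fixes P :: "'p set" and L :: "'p set set"
  assumes "is_net P L 6 4"
  shows "vector_space.dim fscale (binary_code L) \<le> 20"
proof -
  obtain Cls :: "'p set set set" where
    finP: "finite P" and cardP: "card P = 36" and fCls: "finite Cls" and cCls: "card Cls = 4"
    and LU: "L = \<Union>Cls"
    and disj: "\<forall>C1\<in>Cls. \<forall>C2\<in>Cls. C1 \<noteq> C2 \<longrightarrow> C1 \<inter> C2 = {}"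
    and cls: "\<forall>C\<in>Cls. card C = 6 \<and> (\<forall>l\<in>C. l \<subseteq> P \<and> card l = 6) \<and> (\<forall>x\<in>P. \<exists>!l. l \<in> C \<and> x \<in> l)"
    and meet: "\<forall>C1\<in>Cls. \<forall>C2\<in>Cls. C1 \<noteq> C2 \<longrightarrow> (\<forall>l1\<in>C1. \<forall>l2\<in>C2. card (l1 \<inter> l2) = 1)"
    using assms unfolding is_net_def by auto
  have lineval: "ip P (charvec l) (charvec m) = (if K1 = K then 0 else 1)"
    if "K1 \<in> Cls" "K \<in> Cls" "l \<in> K1" "m \<in> K" for K1 K l m
  proof -
    have lP: "l \<subseteq> P" using cls that by blast
    have "ip P (charvec l) (charvec m) = of_nat (card (l \<inter> m))"
    proof -
      have "P \<inter> (l \<inter> m) = l \<inter> m" using lP by blast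
      then show ?thesis using ip_charvec[OF finP, of l m] by simp
    qed
    also have "\<dots> = (if K1 = K then 0 else 1)"
    proof (cases "K1 = K")
      case True
      show ?thesis
      proof (cases "l = m")
        case True
        then have "card (l \<inter> m) = 6" using cls that by auto
        then show ?thesis using \<open>K1 = K\<close> six_bit by simp
      next
        case False
        have "l \<inter> m = {}"
        proof (rule ccontr)
          assume "l \<inter> m \<noteq> {}"
          then obtain x where x: "x \<in> l" "x \<in> m" by blast
          then have "x \<in> P" using lP by blast
          then have "\<exists>!l. l \<in> K \<and> x \<in> l"
            by (rule bspec[OF conjunct2[OF conjunct2[OF bspec[OF cls that(2)]]]])
          moreover have "l \<in> K" using that(3) \<open>K1 = K\<close> by simp
          ultimately have "l = m" using ex1_eq_aux[of "\<lambda>l. l \<in> K \<and> x \<in> l" l m] x that(4) by simp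
          then show False using False by simp
        qed
        then show ?thesis using True by simp
      qed
    next
      case False
      then have "card (l \<inter> m) = 1" using meet that by blast
      then show ?thesis using False by simp
    qed
    finally show ?thesis .
  qed
  define rep where "rep K = (SOME l. l \<in> K)" for K :: "'p set set"
  have rep: "rep K \<in> K" if "K \<in> Cls" for K
  proof -
    have "card K = 6" using cls that by blast
    then have "K \<noteq> {}" by auto
    then show ?thesis unfolding rep_def by (simp add: some_in_eq)
  qed
  define C where "C = binary_code L"
  have C_span: "C = F.span (charvec ` L)" by (simp add: C_def binary_code_def)
  have CC: "F.span C = C" unfolding C_span by (rule F.span_span)
  have Csupp: "\<forall>x. x \<notin> P \<longrightarrow> c x = 0" if "c \<in> C" for c
    using that unfolding C_span
  proof (induction rule: F.span_induct_alt)
    case base then show ?case by (simp add: ip_def)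
  next
    case (step a x y)
    then obtain l where l: "l \<in> L" "x = charvec l" by blast
    then have "l \<subseteq> P" using cls LU by blast
    then show ?case using step l by (auto simp: fscale_def charvec_def)
  qed
  have Cclass: "\<forall>K\<in>Cls. \<forall>m\<in>K. ip P c (charvec m) = ip P c (charvec (rep K))" if "c \<in> C" for c
    using that unfolding C_span
  proof (induction rule: F.span_induct_alt)
    case base then show ?case by (simp add: ip_def)
  next
    case (step a x y)
    then obtain l where l: "l \<in> L" "x = charvec l" by blast
    then obtain K1 where K1: "K1 \<in> Cls" "l \<in> K1" using LU by blast
    show ?case
    proof (intro ballI)
      fix K m assume K: "K \<in> Cls" "m \<in> K"
      have "ip P x (charvec m) = ip P x (charvec (rep K))"
        using lineval[OF K1(1) K(1) K1(2) K(2)] lineval[OF K1(1) K(1) K1(2) rep[OF K(1)]] l by simp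
      then show "ip P (fscale a x + y) (charvec m) = ip P (fscale a x + y) (charvec (rep K))"
        using step.IH K by (simp only: ip_add_left ip_scale_left; simp)
    qed
  qed
  define D where "D = {d\<in>C. \<forall>m\<in>L. ip P d (charvec m) = 0}"
  have orth: "ip P c d = 0" if "d \<in> D" "c \<in> C" for c d
    using that(2) unfolding C_span
  proof (induction rule: F.span_induct_alt)
    case base then show ?case by (simp add: ip_def)
  next
    case (step a x y)
    then obtain l where l: "l \<in> L" "x = charvec l" by blast
    then have "ip P x d = 0" using that(1) unfolding D_def by (simp add: ip_comm)
    then show ?case using step.IH by (simp only: ip_add_left ip_scale_left; simp)
  qed
  have finC: "finite C"
    by (rule finite_subset[OF _ supp_finite[OF finP]]) (use Csupp in blast)
  have DC: "D \<subseteq> C" unfolding D_def by blast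
  have finD: "finite D" using finC DC finite_subset by blast
  have C0: "0 \<in> C" unfolding C_span by (rule F.span_zero)
  have Cadd: "\<forall>a\<in>C. \<forall>b\<in>C. a + b \<in> C" unfolding C_span using F.span_add by blast
  have "card C * card D \<le> 2 ^ card P"
  proof (rule orth_count[OF finP])
    show "\<forall>u\<in>C. \<forall>x. x \<notin> P \<longrightarrow> u x = 0" using Csupp by blast
    show "\<forall>w\<in>D. \<forall>x. x \<notin> P \<longrightarrow> w x = 0" using Csupp DC by blast
    show "0 \<in> C" by (rule C0)
    show "0 \<in> D" unfolding D_def using C0 by simp
    show "\<forall>a\<in>C. \<forall>b\<in>C. a + b \<in> C" by (rule Cadd)
    show "\<forall>a\<in>D. \<forall>b\<in>D. a + b \<in> D"
    proof (intro ballI)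
      fix a b assume ab: "a \<in> D" "b \<in> D"
      then have "a + b \<in> C" using Cadd DC by blast
      moreover have "\<forall>m\<in>L. ip P (a + b) (charvec m) = 0"
        using ab unfolding D_def by (simp only: ip_add_left; simp)
      ultimately show "a + b \<in> D" unfolding D_def by blast
    qed
    show "\<forall>u\<in>C. \<forall>w\<in>D. (\<Sum>x\<in>P. u x * w x) = 0"
      using orth unfolding ip_def by blast
  qed
  then have CD: "card C * card D \<le> 2 ^ 36" using cardP by simp
  define psi where "psi c = {K\<in>Cls. ip P c (charvec (rep K)) = 1}" for c
  define sel where "sel S = (SOME c. c \<in> C \<and> psi c = S)" for S
  define g where "g c = (psi c, c + sel (psi c))" for c
  have sel: "sel (psi c) \<in> C \<and> psi (sel (psi c)) = psi c" if "c \<in> C" for c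
    unfolding sel_def by (rule someI[of _ c]) (use that in blast)
  have gD: "c + sel (psi c) \<in> D" if c: "c \<in> C" for c
  proof -
    let ?s = "sel (psi c)"
    have s: "?s \<in> C" "psi ?s = psi c" using sel[OF c] by auto
    have "c + ?s \<in> C" using Cadd c s by blast
    moreover have "\<forall>m\<in>L. ip P (c + ?s) (charvec m) = 0"
    proof
      fix m assume "m \<in> L"
      then obtain K where K: "K \<in> Cls" "m \<in> K" using LU by blast
      have "(K \<in> psi c) = (K \<in> psi ?s)" using s by simp
      then have "(ip P c (charvec (rep K)) = 1) = (ip P ?s (charvec (rep K)) = 1)"
        unfolding psi_def using K by simp
      then have eq: "ip P c (charvec (rep K)) = ip P ?s (charvec (rep K))"
        by (rule bit_eq_from_iff)
      have "ip P (c + ?s) (charvec m) = ip P c (charvec m) + ip P ?s (charvec m)"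
        by (rule ip_add_left)
      also have "\<dots> = ip P c (charvec (rep K)) + ip P ?s (charvec (rep K))"
        using Cclass[OF c] Cclass[OF s(1)] K by simp
      also have "\<dots> = 0" using eq by simp
      finally show "ip P (c + ?s) (charvec m) = 0" .
    qed
    ultimately show ?thesis unfolding D_def by blast
  qed
  have "inj_on g C"
  proof
    fix c c' assume "c \<in> C" "c' \<in> C" "g c = g c'"
    then have "psi c = psi c'" "c + sel (psi c) = c' + sel (psi c')" unfolding g_def by auto
    then show "c = c'" by simp
  qed
  moreover have "g ` C \<subseteq> Pow Cls \<times> D" using gD unfolding g_def psi_def by auto
  ultimately have "card C \<le> card (Pow Cls \<times> D)"
    using card_inj_on_le finD fCls by (metis finite_Pow_iff finite_SigmaI)
  also have "\<dots> = 16 * card D" using cCls fCls by (simp add: card_cartesian_product card_Pow)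
  finally have "card C \<le> 16 * card D" .
  then have "card C * card C \<le> 16 * card D * card C" by simp
  also have "\<dots> \<le> 16 * 2 ^ 36" using CD by (simp add: mult.commute)
  finally have "(card C)^2 \<le> (2^20)^2" by (simp add: power2_eq_square)
  then have cC: "card C \<le> 2 ^ 20" using power2_le_imp_le by blast
  have "2 ^ F.dim C \<le> card C" by (rule card_ge_dim[OF finC CC])
  then have "(2::nat) ^ F.dim C \<le> 2 ^ 20" using cC by linarith
  then have "F.dim C \<le> 20" by (rule power_le_imp_le_exp[rotated]) simp
  then show ?thesis unfolding C_def .
qed

end
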